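(* Let $r \ge 3$ and $2 \le k \le r$ be integers and let $n \ge 2\binom{2k-1}{k}^{-1}(r-k)r^{k+1}$. Let $\mathcal{H}$ be an intersecting $r$-uniform $n$-vertex hypergraph with $\delta_{r-1}^+(\mathcal{H}) \ge k$ having the maximum number of hyperedges among all intersecting $r$-uniform $n$-vertex hypergraphs with minimum positive co-degree at least $k$. Then $\tau(\mathcal{H}) = k$.
   Context: A hypergraph is intersecting if every two of its hyperedges share at least one vertex. For a non-empty $r$-uniform hypergraph $\mathcal{H}$, the minimum positive co-degree $\delta_{r-1}^+(\mathcal{H})$ is the largest integer $k$ such that every $(r-1)$-set of vertices that is contained in at least one hyperedge of $\mathcal{H}$ is contained in at least $k$ distinct hyperedges of $\mathcal{H}$; for the empty hypergraph it is $0$. A transversal of $\mathcal{H}$ is a set of vertices meeting every hyperedge, and $\tau(\mathcal{H})$ is the minimum size of a transversal. *)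

theory Defs
  imports Complex_Main
begin

definition uniform_hg :: "nat \<Rightarrow> 'a set \<Rightarrow> 'a set set \<Rightarrow> bool" where
  "uniform_hg r V H \<longleftrightarrow> (\<forall>e\<in>H. e \<subseteq> V \<and> card e = r)"

definition intersecting :: "'a set set \<Rightarrow> bool" where
  "intersecting H \<longleftrightarrow> (\<forall>e\<in>H. \<forall>f\<in>H. e \<inter> f \<noteq> {})"

definition codeg :: "'a set set \<Rightarrow> 'a set \<Rightarrow> nat" where
  "codeg H S = card {e\<in>H. S \<subseteq> e}"

text \<open>Minimum positive co-degree (0 for the empty hypergraph).\<close>
definition min_pos_codeg :: "nat \<Rightarrow> 'a set set \<Rightarrow> nat" where
  "min_pos_codeg r H =
     (if H = {} then 0
      else Min {codeg H S | S. card S = r - 1 \<and> (\<exists>e\<in>H. S \<subseteq> e)})"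

definition is_transversal :: "'a set \<Rightarrow> 'a set set \<Rightarrow> 'a set \<Rightarrow> bool" where
  "is_transversal V H T \<longleftrightarrow> T \<subseteq> V \<and> (\<forall>e\<in>H. T \<inter> e \<noteq> {})"

definition tau :: "'a set \<Rightarrow> 'a set set \<Rightarrow> nat" where
  "tau V H = (LEAST t. \<exists>T. is_transversal V H T \<and> card T = t)"

end

theory Submission
  imports Defs
begin


lemma codeg_ge:
  assumes fin: "finite H" and mp: "min_pos_codeg r H \<ge> k"
    and "S \<subseteq> e" "e \<in> H" "card S = r - 1"
  shows "k \<le> codeg H S"
proof -
  have ne: "H \<noteq> {}" using assms(4) by auto
  let ?Q = "{codeg H S | S. card S = r - 1 \<and> (\<exists>e\<in>H. S \<subseteq> e)}"
  have "?Q \<subseteq> {0..card H}" unfolding codeg_def using fin by (auto intro: card_mono)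
  hence "finite ?Q" by (rule finite_subset) simp
  moreover have "codeg H S \<in> ?Q" using assms by blast
  ultimately have "Min ?Q \<le> codeg H S" by simp
  moreover have "min_pos_codeg r H = Min ?Q" using ne unfolding min_pos_codeg_def by simp
  ultimately show ?thesis using mp by linarith
qed

lemma finite_H:
  assumes "finite V" "uniform_hg r V H" shows "finite H"
proof -
  have "H \<subseteq> Pow V" using assms(2) unfolding uniform_hg_def by auto
  thus ?thesis using assms(1) by (meson finite_Pow_iff finite_subset)
qed

lemma tau_lower:
  assumes finV: "finite V" and unif: "uniform_hg r V H" and r1: "r \<ge> 1"
    and cd: "\<And>S e. e \<in> H \<Longrightarrow> S \<subseteq> e \<Longrightarrow> card S = r - 1 \<Longrightarrow> k \<le> codeg H S"
    and tr: "is_transversal V H T" and ne: "H \<noteq> {}"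
  shows "k \<le> card T"
proof (rule ccontr)
  assume lt: "\<not> k \<le> card T"
  have finT: "finite T" using tr finV unfolding is_transversal_def by (auto intro: finite_subset)
  have finH: "finite H" using finite_H[OF finV unif] .
  have main: "\<forall>e\<in>H. card (e \<inter> T) = m \<longrightarrow> False" for m
  proof (induction m)
    case 0
    show ?case
    proof (intro ballI impI)
      fix e assume e: "e \<in> H" "card (e \<inter> T) = 0"
      hence "e \<inter> T = {}" using finT by simp
      thus False using tr e unfolding is_transversal_def by blast
    qed
  next
    case (Suc m)
    show ?case
    proof (intro ballI impI)
      fix e assume e: "e \<in> H" "card (e \<inter> T) = Suc m"
      have "e \<inter> T \<noteq> {}" using e(2) by auto
      then obtain t where t: "t \<in> e \<inter> T" by blast
      define S where "S = e - {t}"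
      have ce: "card e = r" "e \<subseteq> V" using unif e unfolding uniform_hg_def by auto
      have fine: "finite e" using ce finV finite_subset by blast
      have cS: "card S = r - 1" using ce t fine unfolding S_def by simp
      have Se: "S \<subseteq> e" unfolding S_def by blast
      have finS: "finite S" using fine Se finite_subset by blast
      define E where "E = {e'\<in>H. S \<subseteq> e'}"
      have cE: "k \<le> card E" using cd[OF e(1) Se cS] unfolding codeg_def E_def .
      have single: "\<exists>x. e' - S = {x}" if "e' \<in> E" for e'
      proof -
        have ce': "card e' = r" "e' \<subseteq> V" "S \<subseteq> e'" using that unif unfolding E_def uniform_hg_def by auto
        hence "card (e' - S) = 1" using finS cS r1 by (simp add: card_Diff_subset)
        thus ?thesis using card_1_singleton_iff[of "e' - S"] by simp
      qed
      define g where "g e' = the_elem (e' - S)" for e'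
      have gE: "e' - S = {g e'}" if eE: "e' \<in> E" for e'
      proof -
        obtain z where "e' - S = {z}" using single[OF eE] by blast
        thus ?thesis unfolding g_def by simp
      qed
      define E1 where "E1 = {e'\<in>E. (e' - S) \<inter> T \<noteq> {}}"
      have "inj_on g E1"
      proof (rule inj_onI)
        fix x y assume xy: "x \<in> E1" "y \<in> E1" "g x = g y"
        have "S \<subseteq> x" "S \<subseteq> y" using xy unfolding E1_def E_def by auto
        moreover have "x - S = {g x}" "y - S = {g y}" using xy(1,2) gE unfolding E1_def by auto
        ultimately have "x = S \<union> {g x}" "y = S \<union> {g y}" by blast+
        thus "x = y" using xy(3) by metis
      qed
      moreover have "g ` E1 \<subseteq> T"
      proof
        fix z assume "z \<in> g ` E1"
        then obtain x where x: "x \<in> E1" "z = g x" by blast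
        have xE: "x \<in> E" "(x - S) \<inter> T \<noteq> {}" using x(1) unfolding E1_def by auto
        have "x - S = {g x}" using gE[OF xE(1)] .
        thus "z \<in> T" using xE(2) x(2) by auto
      qed
      ultimately have cE1: "card E1 \<le> card T" using finT by (rule card_inj_on_le)
      have finE: "finite E" using finH unfolding E_def by simp
      have "\<not> E \<subseteq> E1"
      proof
        assume "E \<subseteq> E1"
        hence "card E \<le> card E1" using finE unfolding E1_def by (auto intro: card_mono)
        thus False using cE cE1 lt by linarith
      qed
      then obtain e' where e': "e' \<in> E" "(e' - S) \<inter> T = {}" unfolding E1_def by blast
      have "S \<subseteq> e'" using e' unfolding E_def by simp
      hence "e' \<inter> T = (e \<inter> T) - {t}" using e'(2) unfolding S_def by auto
      hence "card (e' \<inter> T) = m" using e t finT by (simp add: card_Diff_singleton)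
      thus False using Suc.IH e' unfolding E_def by blast
    qed
  qed
  obtain e where "e \<in> H" using ne by blast
  thus False using main[of "card (e \<inter> T)"] by blast
qed

lemma branch:
  assumes finV: "finite V" and cV: "card V = n" and unif: "uniform_hg r V H" and inter: "intersecting H"
    and noT: "\<And>T. is_transversal V H T \<Longrightarrow> K \<le> card T"
  shows "S \<subseteq> V \<Longrightarrow> card S = j \<Longrightarrow> j + m \<le> K \<Longrightarrow>
     card {e\<in>H. S \<subseteq> e} \<le> r^m * ((n - (j+m)) choose (r - (j+m)))"
proof (induction m arbitrary: S j)
  case 0
  have finS: "finite S" using 0 finV finite_subset by blast
  let ?B = "{B. B \<subseteq> V - S \<and> card B = r - j}"
  have "{e\<in>H. S \<subseteq> e} \<subseteq> (\<lambda>B. S \<union> B) ` ?B"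
  proof
    fix e assume "e \<in> {e\<in>H. S \<subseteq> e}"
    hence eH: "e \<in> H" "S \<subseteq> e" by auto
    have "card e = r" "e \<subseteq> V" using eH unif unfolding uniform_hg_def by auto
    hence "e - S \<in> ?B" using eH 0 finS by (auto simp: card_Diff_subset)
    moreover have "e = S \<union> (e - S)" using eH by auto
    ultimately show "e \<in> (\<lambda>B. S \<union> B) ` ?B" by blast
  qed
  moreover have finB: "finite ?B" by (rule finite_subset[of _ "Pow V"]) (use finV in auto)
  ultimately have "card {e\<in>H. S \<subseteq> e} \<le> card ((\<lambda>B. S \<union> B) ` ?B)"
    by (intro card_mono) auto
  also have "\<dots> \<le> card ?B" by (rule card_image_le[OF finB])
  also have "\<dots> = (n - j) choose (r - j)"
    using n_subsets[of "V - S" "r - j"] finV 0 cV finS by (simp add: card_Diff_subset)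
  finally show ?case by simp
next
  case (Suc m)
  have "\<not> is_transversal V H S"
  proof
    assume "is_transversal V H S"
    hence "K \<le> card S" by (rule noT)
    thus False using Suc.prems by simp
  qed
  then obtain f where f: "f \<in> H" "S \<inter> f = {}" using Suc.prems unfolding is_transversal_def by blast
  have cf: "card f = r" "f \<subseteq> V" using f unif unfolding uniform_hg_def by auto
  have finf: "finite f" using cf finV finite_subset by blast
  have finH: "finite H" using finite_H[OF finV unif] .
  have "{e\<in>H. S \<subseteq> e} \<subseteq> (\<Union>v\<in>f. {e\<in>H. insert v S \<subseteq> e})"
  proof (rule subsetI)
    fix e assume "e \<in> {e\<in>H. S \<subseteq> e}"
    hence eH: "e \<in> H" "S \<subseteq> e" by auto
    have "e \<inter> f \<noteq> {}" using inter f(1) eH(1) unfolding intersecting_def by blast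
    then obtain v where v: "v \<in> e" "v \<in> f" by blast
    hence "insert v S \<subseteq> e" using eH by blast
    thus "e \<in> (\<Union>v\<in>f. {e\<in>H. insert v S \<subseteq> e})" using eH v by blast
  qed
  hence "card {e\<in>H. S \<subseteq> e} \<le> card (\<Union>v\<in>f. {e\<in>H. insert v S \<subseteq> e})"
    using finH finf by (intro card_mono) auto
  also have "\<dots> \<le> (\<Sum>v\<in>f. card {e\<in>H. insert v S \<subseteq> e})" by (rule card_UN_le[OF finf])
  also have "\<dots> \<le> (\<Sum>v\<in>f. r^m * ((n - (Suc j+m)) choose (r - (Suc j+m))))"
  proof (rule sum_mono)
    fix v assume v: "v \<in> f"
    have finS: "finite S" using Suc.prems finV finite_subset by blast
    have "v \<notin> S" using v f by blast
    hence "card (insert v S) = Suc j" using finS Suc.prems by simp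
    moreover have "insert v S \<subseteq> V" using v cf Suc.prems by blast
    ultimately show "card {e\<in>H. insert v S \<subseteq> e} \<le> r^m * ((n - (Suc j+m)) choose (r - (Suc j+m)))"
      using Suc.IH[of "insert v S" "Suc j"] Suc.prems by simp
  qed
  also have "\<dots> = r^Suc m * ((n - (j + Suc m)) choose (r - (j + Suc m)))" using cf by simp
  finally show ?case .
qed



lemma codeg_from_set:
  assumes "finite G" "finite X" "X \<inter> S = {}" "\<And>x. x \<in> X \<Longrightarrow> insert x S \<in> G"
  shows "card X \<le> codeg G S"
proof -
  have "inj_on (\<lambda>x. insert x S) X"
    using assms(3) by (auto simp: inj_on_def insert_ident) 
  moreover have "(\<lambda>x. insert x S) ` X \<subseteq> {e\<in>G. S \<subseteq> e}" using assms(4) by auto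
  ultimately show ?thesis unfolding codeg_def using assms(1)
    by (intro card_inj_on_le) auto
qed

lemma constr:
  assumes finV: "finite V" and cV: "card V = n" and AV: "A \<subseteq> V" and cA: "card A = 2*k - 1"
    and k1: "1 \<le> k" and kr: "k \<le> r" and nb: "r + k \<le> n + 1"
  defines "G \<equiv> {e. e \<subseteq> V \<and> card e = r \<and> k \<le> card (e \<inter> A)}"
  shows "uniform_hg r V G" "intersecting G" "min_pos_codeg r G \<ge> k"
    "((2*k-1) choose k) * ((n - (2*k-1)) choose (r-k)) \<le> card G"
proof -
  have finA: "finite A" using AV finV finite_subset by blast
  show U: "uniform_hg r V G" unfolding uniform_hg_def G_def by auto
  have finG: "finite G" using finite_H[OF finV U] .
  show "intersecting G" unfolding intersecting_def
  proof (intro ballI)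
    fix e f assume ef: "e \<in> G" "f \<in> G"
    show "e \<inter> f \<noteq> {}"
    proof
      assume "e \<inter> f = {}"
      hence "card ((e \<inter> A) \<union> (f \<inter> A)) = card (e \<inter> A) + card (f \<inter> A)"
        using finA by (intro card_Un_disjoint) auto
      moreover have "card ((e \<inter> A) \<union> (f \<inter> A)) \<le> card A" using finA by (intro card_mono) auto
      moreover have "k \<le> card (e \<inter> A)" "k \<le> card (f \<inter> A)" using ef unfolding G_def by auto
      ultimately show False using cA k1 by linarith
    qed
  qed
  let ?K = "{K. K \<subseteq> A \<and> card K = k}"
  let ?B = "{B. B \<subseteq> V - A \<and> card B = r - k}"
  have inj: "inj_on (\<lambda>(K,B). K \<union> B) (?K \<times> ?B)"
  proof (rule inj_onI, clarify)
    fix K B K' B' assume h: "K \<subseteq> A" "B \<subseteq> V - A" "K' \<subseteq> A" "B' \<subseteq> V - A" "K \<union> B = K' \<union> B'"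
    have "K = (K \<union> B) \<inter> A" "K' = (K' \<union> B') \<inter> A" using h by auto
    moreover have "B = (K \<union> B) - A" "B' = (K' \<union> B') - A" using h by auto
    ultimately show "K = K' \<and> B = B'" using h(5) by simp
  qed
  have sub: "(\<lambda>(K,B). K \<union> B) ` (?K \<times> ?B) \<subseteq> G"
  proof (rule subsetI)
    fix z assume "z \<in> (\<lambda>(K,B). K \<union> B) ` (?K \<times> ?B)"
    then obtain K B where h: "K \<subseteq> A" "card K = k" "B \<subseteq> V - A" "card B = r - k" and z: "z = K \<union> B"
      by auto
    have fK: "finite K" "finite B" using h finA finV finite_subset by (blast, blast)
    have "card (K \<union> B) = k + (r - k)" using h fK by (subst card_Un_disjoint) auto
    moreover have "(K \<union> B) \<inter> A = K" using h by auto
    ultimately show "z \<in> G" unfolding G_def z using h AV kr by auto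
  qed
  have "card (?K \<times> ?B) = ((2*k-1) choose k) * ((n - (2*k-1)) choose (r-k))"
    using n_subsets[OF finA, of k] n_subsets[of "V - A" "r - k"] finV cA cV AV
    by (simp add: card_cartesian_product card_Diff_subset finA)
  moreover have "card ((\<lambda>(K,B). K \<union> B) ` (?K \<times> ?B)) = card (?K \<times> ?B)" by (rule card_image[OF inj])
  ultimately show cG: "((2*k-1) choose k) * ((n - (2*k-1)) choose (r-k)) \<le> card G"
    using card_mono[OF finG sub] by simp
  have "0 < ((2*k-1) choose k)" using k1 by simp
  moreover have "0 < ((n - (2*k-1)) choose (r-k))"
  proof -
    have "r - k \<le> n - (2*k-1)" using nb kr k1 by linarith
    thus ?thesis by simp
  qed
  ultimately have "0 < ((2*k-1) choose k) * ((n - (2*k-1)) choose (r-k))" by simp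
  hence "0 < card G" using cG by linarith
  hence Gne: "G \<noteq> {}" by auto
  let ?Q = "{codeg G S | S. card S = r - 1 \<and> (\<exists>e\<in>G. S \<subseteq> e)}"
  have "?Q \<subseteq> {0..card G}" unfolding codeg_def using finG by (auto intro: card_mono)
  hence finQ: "finite ?Q" by (rule finite_subset) simp
  have Qne: "?Q \<noteq> {}"
  proof -
    obtain e where e: "e \<in> G" using Gne by blast
    have "card e = r" "finite e" using e finV unfolding G_def by (auto intro: finite_subset)
    moreover have "r > 0" using k1 kr by simp
    ultimately obtain x where "x \<in> e" by (metis card.empty ex_in_conv less_irrefl)
    hence "card (e - {x}) = r - 1" "e - {x} \<subseteq> e" using \<open>card e = r\<close> \<open>finite e\<close> by auto
    thus ?thesis using e by blast
  qed
  have "\<forall>q\<in>?Q. k \<le> q"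
  proof clarify
    fix S e assume S: "card S = r - 1" "e \<in> G" "S \<subseteq> e"
    have e: "e \<subseteq> V" "card e = r" "k \<le> card (e \<inter> A)" using S unfolding G_def by auto
    have fe: "finite e" using e finV finite_subset by blast
    have fS: "finite S" using fe S finite_subset by blast
    have SV: "S \<subseteq> V" using S e by blast
    have "card (e - S) = 1" using S e fS k1 kr by (simp add: card_Diff_subset)
    then obtain t where t: "e - S = {t}" by (rule card_1_singletonE)
    have eA: "e \<inter> A \<subseteq> insert t (S \<inter> A)" using t by blast
    have "card (e \<inter> A) \<le> card (insert t (S \<inter> A))" using fS eA by (intro card_mono) auto
    also have "\<dots> \<le> Suc (card (S \<inter> A))" using fS by (simp add: card_insert_if)
    finally have "card (e \<inter> A) \<le> Suc (card (S \<inter> A))" .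
    show "k \<le> codeg G S"
    proof (cases "k \<le> card (S \<inter> A)")
      case True
      have "card (V - S) = n - (r - 1)" using SV fS S cV by (simp add: card_Diff_subset)
      hence "k \<le> card (V - S)" using nb kr k1 by simp
      also have "card (V - S) \<le> codeg G S"
      proof (rule codeg_from_set[OF finG])
        fix x assume x: "x \<in> V - S"
        have "card (insert x S) = r" using x fS S k1 kr by simp
        moreover have "card (S \<inter> A) \<le> card (insert x S \<inter> A)" using fS by (intro card_mono) auto
        ultimately show "insert x S \<in> G" unfolding G_def using x SV True by auto
      qed (use finV in auto)
      finally show ?thesis .
    next
      case False
      hence cSA: "card (S \<inter> A) = k - 1" using \<open>card (e \<inter> A) \<le> Suc (card (S \<inter> A))\<close> e by linarith
      have "k = card (A - S)" using cSA cA finA k1 by (simp add: card_Diff_subset_Int Int_commute)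
      also have "card (A - S) \<le> codeg G S"
      proof (rule codeg_from_set[OF finG])
        fix x assume x: "x \<in> A - S"
        have "card (insert x S) = r" using x fS S k1 kr by simp
        moreover have "insert x S \<inter> A = insert x (S \<inter> A)" using x by auto
        moreover have "card (insert x (S \<inter> A)) = k" using x cSA fS k1 by simp
        ultimately show "insert x S \<in> G" unfolding G_def using x SV AV by auto
      qed (use finA in auto)
      finally show ?thesis .
    qed
  qed
  hence "k \<le> Min ?Q" using finQ Qne by simp
  thus "min_pos_codeg r G \<ge> k" using Gne unfolding min_pos_codeg_def by simp
qed



lemma pascal_bound: "(N+d) choose (Suc i) \<le> (N choose Suc i) + d * ((N+d) choose i)"
proof (induction d)
  case 0 show ?case by simp
next
  case (Suc d)
  have m: "(N+d) choose i \<le> (N + Suc d) choose i" by (rule binomial_right_mono) simp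
  have "(N + Suc d) choose Suc i = ((N+d) choose i) + ((N+d) choose Suc i)" by simp
  also have "\<dots> \<le> ((N+d) choose i) + (N choose Suc i) + d*((N+d) choose i)" using Suc.IH by simp
  also have "\<dots> \<le> ((N+Suc d) choose i) + (N choose Suc i) + d*((N+Suc d) choose i)"
    using m mult_le_mono2[OF m, of d] by linarith
  finally show ?case by simp
qed

lemma absorb: "Suc i * (M choose Suc i) = (M - i) * (M choose i)"
  using binomial_absorption[of i M] binomial_absorb_comp[of M i] by simp

lemma F2: "((N+d) choose j) * (N+d+1-j) \<le> (N choose j)*(N+d+1-j) + d*j*((N+d) choose j)"
proof (cases j)
  case 0 then show ?thesis by simp
next
  case (Suc i)
  have "((N+d) choose Suc i) * (N+d-i) \<le> ((N choose Suc i) + d*((N+d) choose i)) * (N+d-i)"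
    using pascal_bound mult_le_mono1 by blast
  also have "\<dots> = (N choose Suc i)*(N+d-i) + d*(((N+d) choose i)*(N+d-i))" by (simp add: algebra_simps)
  also have "((N+d) choose i)*(N+d-i) = Suc i * ((N+d) choose Suc i)" using absorb[of i "N+d"] by (simp add: mult.commute)
  finally show ?thesis using Suc by (simp add: algebra_simps)
qed

lemma final_real:
  fixes X Y n p q s :: real
  assumes X: "X > 0" and Y: "Y \<ge> 0" and h1: "2*(n-p)*X \<le> n*Y" and h2: "Y*(n-q) \<le> X*(n-s)"
    and nb: "n \<ge> 2*p+2*q" and p: "p > 0" and q: "q \<ge> 0" and s: "s > 0"
  shows False
proof -
  have nq: "n - q > 0" using nb p q by linarith
  have "2*(n-p)*X*(n-q) \<le> n*Y*(n-q)" using mult_right_mono[OF h1, of "n-q"] nq by simp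
  also have "\<dots> = n*(Y*(n-q))" by simp
  also have "\<dots> \<le> n*(X*(n-s))" using mult_left_mono[OF h2, of n] nb p q by simp
  finally have "X*(2*(n-p)*(n-q)) \<le> X*(n*(n-s))" by (simp add: algebra_simps)
  hence i: "2*(n-p)*(n-q) \<le> n*(n-s)" using X by simp
  have "n*(n - 2*(p+q)) \<ge> 0" using nb p q by simp
  moreover have "p*q \<ge> 0" using p q by simp
  moreover have "s*n > 0" using s nb p q by simp
  ultimately show False using i by (simp add: algebra_simps)
qed

lemma choose_bound: "1 \<le> k \<Longrightarrow> (2*k-1) choose k \<le> 4^(k-1)"
proof -
  assume k: "1 \<le> k"
  define m where "m = 2*k-1"
  have "(m choose k) + (m choose (k-1)) \<le> (\<Sum>i\<le>m. m choose i)"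
  proof -
    have "{k, k-1} \<subseteq> {..m}" using k unfolding m_def by auto
    hence "(\<Sum>i\<in>{k,k-1}. m choose i) \<le> (\<Sum>i\<le>m. m choose i)" by (intro sum_mono2) auto
    moreover have "k \<noteq> k - 1" using k by simp
    ultimately show ?thesis by simp
  qed
  also have "\<dots> = 2^m" by (rule choose_row_sum)
  finally have "(m choose k) + (m choose (k-1)) \<le> 2^m" .
  moreover have "m choose k = m choose (m - k)" by (rule binomial_symmetric) (simp add: m_def)
  moreover have "m - k = k - 1" using k m_def by simp
  moreover have mm: "m = Suc (2*(k-1))" using k m_def by simp
  have "(2::nat)^m = 2 * 4^(k-1)" unfolding mm by (simp add: power_mult)
  ultimately have "2 * (m choose k) \<le> 2 * 4^(k-1)" by simp
  thus ?thesis unfolding m_def by simp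
qed

lemma arith_main:
  fixes n r k :: nat
  assumes r3: "r \<ge> 3" and k2: "2 \<le> k" and kr: "k < r"
    and hn: "real n \<ge> 2 * real (r - k) * real r ^ (k + 1) / real ((2 * k - 1) choose k)"
  shows "r + k \<le> n + 1"
    "r^(k+1) * ((n - (k+1)) choose (r - (k+1))) < ((2*k-1) choose k) * ((n - (2*k-1)) choose (r-k))"
proof -
  define a c R where "a = r - k" and "c = (2*k-1) choose k" and "R = r^(k+1)"
  define p q where "p = r + k - 2" and "q = r - 1 + (k-2)*(a-1)"
  have a1: "a \<ge> 1" using kr a_def by simp
  have c0: "c > 0" using k2 c_def by simp
  have "2 * real a * real R / real c \<le> real n" using hn a_def R_def c_def by simp
  hence "2 * real a * real R \<le> real n * real c" using c0 by (simp add: pos_divide_le_eq)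
  hence "real (2*a*R) \<le> real (c*n)" by (simp add: mult.commute)
  hence hc: "2*a*R \<le> c*n" by (simp only: of_nat_le_iff)
  have cb: "c * (2*p+2*q) \<le> 2*a*R"
  proof (cases "r = 3")
    case True
    hence "k = 2" "a = 1" using k2 kr a_def by auto
    hence "c = 3" "R = 27" "p = 3" "q = 2" using True c_def R_def p_def q_def by (auto simp: numeral_eq_Suc)
    thus ?thesis using \<open>a = 1\<close> by simp
  next
    case False
    hence r4: "r \<ge> 4" using r3 by simp
    have "c \<le> 4^(k-1)" unfolding c_def using choose_bound k2 by simp
    also have "(4::nat)^(k-1) \<le> r^(k-1)" using r4 by (rule power_mono) simp
    finally have cr: "c \<le> r^(k-1)" .
    have kk: "k+1 = (k-1) + 2" using k2 by simp
    have R: "R = r^(k-1) * (r*r)" unfolding R_def kk power_add power2_eq_square ..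
    have dj: "(k-2)*(a-1) \<le> r*a" using mult_le_mono[of "k-2" r "a-1" a] kr by simp
    have ra: "r \<le> r*a" using a1 by simp
    have hp: "p \<le> 2*r" using kr k2 unfolding p_def by linarith
    have hq: "q \<le> r + r*a" using dj unfolding q_def by linarith
    have h1: "2*p+2*q \<le> 6*r + 2*(r*a)" using hp hq by linarith
    have h2: "(r*a)*4 \<le> (r*a)*r" using r4 by (rule mult_le_mono2)
    have h3: "(r*a)*r = a*(r*r)" by (simp only: mult_ac)
    have "2*p+2*q \<le> 2*a*(r*r)" using h1 h2 h3 ra by linarith
    hence "c*(2*p+2*q) \<le> r^(k-1) * (2*a*(r*r))" by (rule mult_le_mono[OF cr])
    also have "\<dots> = 2*a*R" unfolding R by (simp only: mult_ac)
    finally show ?thesis .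
  qed
  have nL: "2*p + 2*q \<le> n" using cb hc c0 by (metis le_trans mult_le_cancel1)
  show "r + k \<le> n + 1" using nL k2 r3 unfolding p_def by linarith
  define N d j where "N = n - (2*k-1)" and "d = k - 2" and "j = a - 1"
  have nL': "2*(r+k-2) \<le> n" using nL unfolding p_def by linarith
  have e1a: "n - (k+1) = N + d" using nL' k2 kr unfolding N_def d_def by linarith
  have e1b: "r - (k+1) = j" "r - k = Suc j" using kr unfolding j_def a_def by linarith+
  note e1 = e1a e1b
  show "r^(k+1) * ((n - (k+1)) choose (r - (k+1))) < ((2*k-1) choose k) * ((n - (2*k-1)) choose (r-k))"
  proof (rule ccontr)
    assume "\<not> ?thesis"
    hence h: "c * (N choose Suc j) \<le> R * ((N+d) choose j)"
      using e1 unfolding c_def R_def N_def by simp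
    define x y where "x = N choose j" and "y = (N+d) choose j"
    have jN: "j \<le> N" using nL' k2 kr unfolding N_def j_def a_def by linarith
    have x0: "x > 0" using jN x_def by simp
    have F1: "Suc j * (N choose Suc j) = (N - j) * x" using absorb[of j N] x_def by simp
    have "c * ((N - j) * x) = Suc j * (c * (N choose Suc j))" using F1 by (simp add: algebra_simps)
    also have "\<dots> \<le> Suc j * (R * y)" using mult_le_mono2[OF h, of "Suc j"] y_def by (simp only:)
    finally have s1: "c * ((N - j) * x) \<le> a * R * y" using e1 a_def by (simp add: algebra_simps)
    hence "c * (2 * (N - j) * x) \<le> 2 * a * R * y" by simp
    also have "\<dots> \<le> c * n * y" using hc by (rule mult_le_mono1)
    finally have "c * (2 * (N - j) * x) \<le> c * (n * y)" by (simp add: mult.assoc)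
    hence i1: "2 * (N - j) * x \<le> n * y" using c0 by simp
    have i2: "y * (N+d+1-j) \<le> x * (N+d+1-j) + d*j*y" using F2[of N d j] x_def y_def by simp
    define s where "s = r - 1"
    have e2a: "N - j = n - p" using nL' k2 kr unfolding N_def j_def a_def p_def by linarith
    have e2b: "N+d+1-j = n - s" using nL' k2 kr unfolding N_def d_def j_def a_def s_def by linarith
    have e2c: "q = s + d*j" unfolding q_def s_def d_def j_def by simp
    have e2d: "p \<le> n" "s \<le> n" using nL' k2 kr unfolding p_def s_def by linarith+
    note e2 = e2a e2b e2c e2d
    have r1: "2*(real n - real p)*real x \<le> real n * real y"
    proof -
      have "real (2 * (N - j) * x) \<le> real (n * y)" using i1 by (simp only: of_nat_le_iff)
      thus ?thesis using e2 by (simp add: of_nat_diff)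
    qed
    have r2: "real y*(real n - real q) \<le> real x * (real n - real s)"
    proof -
      have "y * (n - s) \<le> x * (n - s) + d*j*y" using i2 unfolding e2b .
      hence "real (y * (n - s)) \<le> real (x * (n - s) + d*j*y)" by (simp only: of_nat_le_iff)
      hence "real y * (real n - real s) \<le> real x * (real n - real s) + real d * real j * real y"
        using e2d by (simp only: of_nat_mult of_nat_add of_nat_diff)
      moreover have "real q = real s + real d * real j" using e2c by simp
      ultimately show ?thesis by (simp add: algebra_simps)
    qed
    have rn: "2 * real p + 2 * real q \<le> real n" using nL by (simp add: of_nat_le_iff[symmetric])
    have rp: "real p > 0" using k2 r3 unfolding p_def by simp
    have rs: "real s > 0" using r3 unfolding s_def by simp
    show False
      by (rule final_real[OF _ _ r1 r2 rn rp _ rs]) (use x0 in simp_all)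
  qed
qed




theorem lemma8:
  fixes V :: "'a set" and H :: "'a set set" and r k n :: nat
  assumes "r \<ge> 3" and "2 \<le> k" and "k \<le> r"
    and "finite V" and "card V = n"
    and "real n \<ge> 2 * real (r - k) * real r ^ (k + 1) / real ((2 * k - 1) choose k)"
    and "uniform_hg r V H" and "intersecting H" and "min_pos_codeg r H \<ge> k"
    and "\<forall>H'. uniform_hg r V H' \<and> intersecting H' \<and> min_pos_codeg r H' \<ge> k
              \<longrightarrow> card H' \<le> card H"
  shows "tau V H = k"
proof -
  note r3 = assms(1) and k2 = assms(2) and kr = assms(3) and finV = assms(4) and cV = assms(5)
    and hn = assms(6) and unif = assms(7) and inter = assms(8) and mp = assms(9) and maxH = assms(10)
  have finH: "finite H" using finite_H[OF finV unif] .
  have ne: "H \<noteq> {}" using mp k2 unfolding min_pos_codeg_def by auto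
  have cd: "\<And>S e. e \<in> H \<Longrightarrow> S \<subseteq> e \<Longrightarrow> card S = r - 1 \<Longrightarrow> k \<le> codeg H S"
    using codeg_ge[OF finH mp] by blast
  obtain e0 where e0: "e0 \<in> H" using ne by blast
  have ce0: "card e0 = r" "e0 \<subseteq> V" using e0 unif unfolding uniform_hg_def by auto
  have e0tr: "is_transversal V H e0" using e0 ce0 inter unfolding is_transversal_def intersecting_def by blast
  have Ptau: "\<exists>T. is_transversal V H T \<and> card T = tau V H"
    unfolding tau_def by (rule LeastI[of _ "card e0"]) (use e0tr in blast)
  have le: "\<And>T. is_transversal V H T \<Longrightarrow> tau V H \<le> card T"
    unfolding tau_def by (rule Least_le) blast
  have ge: "k \<le> tau V H"
  proof -
    obtain T where T: "is_transversal V H T" "card T = tau V H" using Ptau by blast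
    show ?thesis using tau_lower[OF finV unif _ cd T(1) ne] r3 T(2) by simp
  qed
  show ?thesis
  proof (rule ccontr)
    assume "tau V H \<noteq> k"
    hence gt: "k + 1 \<le> tau V H" using ge by simp
    have noT: "\<And>T. is_transversal V H T \<Longrightarrow> k + 1 \<le> card T" using le gt by (meson le_trans)
    have kr': "k < r" using noT[OF e0tr] ce0 kr by simp
    have cH: "card H \<le> r^(k+1) * ((n - (0+(k+1))) choose (r - (0+(k+1))))"
      using branch[OF finV cV unif inter noT, of "{}" 0 "k+1"] by simp
    have nb: "r + k \<le> n + 1"
      and ineq: "r^(k+1) * ((n - (k+1)) choose (r - (k+1))) < ((2*k-1) choose k) * ((n - (2*k-1)) choose (r-k))"
      using arith_main[OF r3 k2 kr' hn] by auto
    have "2*k - 1 \<le> card V" using nb kr k2 cV by linarith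
    then obtain A where A: "A \<subseteq> V" "card A = 2*k - 1" by (rule obtain_subset_with_card_n)
    define G where "G = {e. e \<subseteq> V \<and> card e = r \<and> k \<le> card (e \<inter> A)}"
    have k1: "1 \<le> k" using k2 by simp
    note cs = constr[OF finV cV A(1) A(2) k1 kr nb, folded G_def]
    have "card G \<le> card H" using maxH cs(1,2,3) by blast
    thus False using cs(4) cH ineq by simp
  qed
qed


end
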